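(* Let $F$ be the cdf of a continuous nonnegative random variable with unbounded support $[0,\infty)$, density $f$ and hazard rate $h=f/(1-F)$. Let $\sigma_1,\sigma_2\geq0$, $\lambda_1,\lambda_2>0$, $r_1,r_2\geq0$, and let $n_1,n_2,n_1^*,n_2^*$ be positive integers with $n_1r_1+n_2r_2=1$ and $n_1^*r_1+n_2^*r_2=1$; put $n=n_1+n_2$, $n^*=n_1^*+n_2^*$. Let $U_n$ and $U_{n^*}$ be random variables with cdfs $$F_{U_n}(x)=n_1r_1F\!\left(\tfrac{x-\sigma_1}{\lambda_1}\right)I(x>\sigma_1)+n_2r_2F\!\left(\tfrac{x-\sigma_2}{\lambda_2}\right)I(x>\sigma_2),$$ $$F_{U_{n^*}}(x)=n_1^*r_1F\!\left(\tfrac{x-\sigma_1}{\lambda_1}\right)I(x>\sigma_1)+n_2^*r_2F\!\left(\tfrac{x-\sigma_2}{\lambda_2}\right)I(x>\sigma_2).$$ Suppose either that $F$ is IFR and $(\lambda_1,\lambda_2),(\sigma_1,\sigma_2)\in\mathcal{D}_2^+$, or that $F$ is DPFR and $(\lambda_1,\lambda_2),(\sigma_1,\sigma_2)\in\mathcal{E}_2^+$. If $n_1n_2^*\geq n_1^*n_2$, then $U_n\geq_{hr}U_{n^*}$.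
   Context: $I(x>\sigma)$ is $1$ if $x>\sigma$ and $0$ otherwise. $\mathcal{D}_2^+=\{(u_1,u_2):u_1\geq u_2>0\}$, $\mathcal{E}_2^+=\{(u_1,u_2):0<u_1\leq u_2\}$. $F$ is IFR if $h(x)$ is increasing in $x>0$; $F$ is DPFR (decreasing proportional failure rate) if $xh(x)$ is decreasing in $x>0$. $X\geq_{hr}Y$ means the hazard rate of $X$ is at most the hazard rate of $Y$ at every $x\geq0$ (equivalently $\bar F_X(x)/\bar F_Y(x)$ is increasing). *)

theory Defs
  imports "HOL-Analysis.Analysis"
begin

definition Ind_gt :: "real \<Rightarrow> real \<Rightarrow> real" where
  "Ind_gt x s = (if x > s then 1 else 0)"

definition hazard :: "(real \<Rightarrow> real) \<Rightarrow> (real \<Rightarrow> real) \<Rightarrow> real \<Rightarrow> real" where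
  "hazard F f x = f x / (1 - F x)"

definition IFR :: "(real \<Rightarrow> real) \<Rightarrow> (real \<Rightarrow> real) \<Rightarrow> bool" where
  "IFR F f \<longleftrightarrow> (\<forall>x y. 0 < x \<longrightarrow> x \<le> y \<longrightarrow> hazard F f x \<le> hazard F f y)"

definition DPFR :: "(real \<Rightarrow> real) \<Rightarrow> (real \<Rightarrow> real) \<Rightarrow> bool" where
  "DPFR F f \<longleftrightarrow> (\<forall>x y. 0 < x \<longrightarrow> x \<le> y \<longrightarrow> y * hazard F f y \<le> x * hazard F f x)"

definition hr_ge :: "(real \<Rightarrow> real) \<Rightarrow> (real \<Rightarrow> real) \<Rightarrow> bool" where
  "hr_ge FX FY \<longleftrightarrow>
     (\<forall>x y. 0 \<le> x \<longrightarrow> x \<le> y \<longrightarrow> (1 - FX x) / (1 - FY x) \<le> (1 - FX y) / (1 - FY y))"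

definition U_cdf :: "(real \<Rightarrow> real) \<Rightarrow> real \<Rightarrow> real \<Rightarrow> real \<Rightarrow> real \<Rightarrow> real \<Rightarrow> real
    \<Rightarrow> nat \<Rightarrow> nat \<Rightarrow> real \<Rightarrow> real" where
  "U_cdf F \<sigma>1 \<sigma>2 l1 l2 r1 r2 m1 m2 x =
     real m1 * r1 * F ((x - \<sigma>1) / l1) * Ind_gt x \<sigma>1
   + real m2 * r2 * F ((x - \<sigma>2) / l2) * Ind_gt x \<sigma>2"

end

theory Submission
  imports Defs
begin

lemma piece_integral:
  fixes f F :: "real \<Rightarrow> real"
  assumes dens: "\<And>x. x \<ge> 0 \<Longrightarrow> (f has_integral F x) {0..x}" and "0 \<le> p" "p \<le> q"
  shows "(f has_integral (F q - F p)) {p..q}"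
proof -
  have q0: "0 \<le> q" using assms by linarith
  have iq: "f integrable_on {0..q}" using dens[OF q0] unfolding integrable_on_def by blast
  have sub: "{p..q} \<subseteq> {0..q}" using assms by auto
  have ip: "f integrable_on {p..q}" by (rule integrable_subinterval_real[OF iq sub])
  have "integral {0..p} f + integral {p..q} f = integral {0..q} f"
    by (rule Henstock_Kurzweil_Integration.integral_combine[OF assms(2) assms(3) iq])
  moreover have "integral {0..p} f = F p" using dens[OF assms(2)] by (rule integral_unique)
  moreover have "integral {0..q} f = F q" using dens[OF q0] by (rule integral_unique)
  ultimately have "integral {p..q} f = F q - F p" by linarith
  with ip show ?thesis by (simp add: has_integral_integral)
qed

lemma int_lower:
  fixes f :: "real \<Rightarrow> real"
  assumes "(f has_integral I) {p..q}" "p \<le> q" "\<And>s. s \<in> {p..q} \<Longrightarrow> K \<le> f s"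
  shows "K * (q - p) \<le> I"
proof -
  have "((\<lambda>_. K) has_integral (K * (q - p))) {p..q}"
    using has_integral_const_real[of K p q] assms(2) by (simp add: mult.commute)
  then show ?thesis using has_integral_le[OF _ assms(1)] assms(3) by blast
qed

lemma int_upper:
  fixes f :: "real \<Rightarrow> real"
  assumes "(f has_integral I) {p..q}" "p \<le> q" "\<And>s. s \<in> {p<..q} \<Longrightarrow> f s \<le> K"
  shows "I \<le> K * (q - p)"
proof -
  define g where "g s = (if s = p then K else f s)" for s
  have g: "(g has_integral I) {p..q}"
    by (rule has_integral_spike_finite[of "{p}", OF _ _ assms(1)]) (auto simp: g_def)
  have "((\<lambda>_. K) has_integral (K * (q - p))) {p..q}"
    using has_integral_const_real[of K p q] assms(2) by (simp add: mult.commute)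
  then show ?thesis using has_integral_le[OF g] assms(3) by (force simp: g_def)
qed

lemma gron_up:
  fixes S :: "real \<Rightarrow> real"
  assumes step: "\<And>p q. y \<le> p \<Longrightarrow> p \<le> q \<Longrightarrow> S q * (1 + c * (q - p)) \<le> S p"
    and c: "c \<ge> 0" and pos: "\<And>t. S t > 0" and yt: "y \<le> t"
  shows "S t * exp (c * (t - y)) \<le> S y"
proof -
  have key: "S t * (1 + c * (t - y) / real N) ^ N \<le> S y" if N: "N > 0" for N :: nat
  proof -
    define d where "d = (t - y) / real N"
    have d0: "d \<ge> 0" using yt N by (simp add: d_def)
    have "\<forall>k::nat. S (y + real k * d) * (1 + c * d) ^ k \<le> S y"
    proof
      fix k :: nat show "S (y + real k * d) * (1 + c * d) ^ k \<le> S y"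
      proof (induction k)
        case 0 then show ?case by simp
      next
        case (Suc k)
        have cd: "0 \<le> (1 + c * d) ^ k" using c d0 by simp
        have "S (y + real (Suc k) * d) * (1 + c * ((y + real (Suc k) * d) - (y + real k * d))) \<le> S (y + real k * d)"
          by (rule step) (use d0 in \<open>auto simp: algebra_simps\<close>)
        then have "S (y + real (Suc k) * d) * (1 + c * d) \<le> S (y + real k * d)"
          by (simp add: algebra_simps)
        then have "S (y + real (Suc k) * d) * (1 + c * d) * (1 + c * d) ^ k \<le> S (y + real k * d) * (1 + c * d) ^ k"
          using cd by (rule mult_right_mono)
        then show ?case using Suc by (simp add: mult.assoc)
      qed
    qed
    then have "S (y + real N * d) * (1 + c * d) ^ N \<le> S y" by blast
    moreover have "y + real N * d = t" using N by (simp add: d_def)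
    moreover have "c * d = c * (t - y) / real N" by (simp add: d_def)
    ultimately show ?thesis by simp
  qed
  have lim: "(\<lambda>N. S t * (1 + c * (t - y) / real N) ^ N) \<longlonglongrightarrow> S t * exp (c * (t - y))"
    by (intro tendsto_mult tendsto_const tendsto_exp_limit_sequentially)
  show ?thesis
  proof (rule LIMSEQ_le_const2[OF lim], rule exI[of _ 1], intro allI impI)
    fix n :: nat assume "1 \<le> n"
    then show "S t * (1 + c * (t - y) / real n) ^ n \<le> S y" using key[of n] by simp
  qed
qed

lemma gron_low:
  fixes S :: "real \<Rightarrow> real"
  assumes step: "\<And>p q. x \<le> p \<Longrightarrow> p \<le> q \<Longrightarrow> q \<le> y \<Longrightarrow> S p * (1 - c * (q - p)) \<le> S q"
    and c: "c \<ge> 0" and pos: "\<And>t. S t > 0" and xy: "x \<le> y"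
  shows "S x * exp (- c * (y - x)) \<le> S y"
proof -
  have key: "S x * (1 + (- c * (y - x)) / real N) ^ N \<le> S y" if N: "N > 0" "c * (y - x) \<le> real N" for N :: nat
  proof -
    define d where "d = (y - x) / real N"
    have d0: "d \<ge> 0" using xy N by (simp add: d_def)
    have cd1: "c * d \<le> 1" using N by (simp add: d_def divide_simps)
    have "\<forall>k::nat. k \<le> N \<longrightarrow> S x * (1 - c * d) ^ k \<le> S (x + real k * d)"
    proof
      fix k :: nat show "k \<le> N \<longrightarrow> S x * (1 - c * d) ^ k \<le> S (x + real k * d)"
      proof (induction k)
        case 0 then show ?case by simp
      next
        case (Suc k)
        show ?case
        proof
          assume kN: "Suc k \<le> N"
          have le: "x + real (Suc k) * d \<le> y"
          proof -
            have "real (Suc k) * d \<le> real N * d" using kN d0 by (intro mult_right_mono) auto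
            also have "real N * d = y - x" using N by (simp add: d_def)
            finally show ?thesis by simp
          qed
          have "S (x + real k * d) * (1 - c * ((x + real (Suc k) * d) - (x + real k * d))) \<le> S (x + real (Suc k) * d)"
            by (rule step) (use d0 le in \<open>auto simp: algebra_simps\<close>)
          then have st: "S (x + real k * d) * (1 - c * d) \<le> S (x + real (Suc k) * d)"
            by (simp add: algebra_simps)
          have "S x * (1 - c * d) ^ Suc k = (S x * (1 - c * d) ^ k) * (1 - c * d)" by simp
          also have "\<dots> \<le> S (x + real k * d) * (1 - c * d)"
            using Suc kN cd1 by (intro mult_right_mono) auto
          finally show "S x * (1 - c * d) ^ Suc k \<le> S (x + real (Suc k) * d)" using st by linarith
        qed
      qed
    qed
    then have "S x * (1 - c * d) ^ N \<le> S (x + real N * d)" by blast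
    moreover have "x + real N * d = y" using N by (simp add: d_def)
    moreover have "1 - c * d = 1 + (- c * (y - x)) / real N" by (simp add: d_def)
    ultimately show ?thesis by simp
  qed
  have lim: "(\<lambda>N. S x * (1 + (- c * (y - x)) / real N) ^ N) \<longlonglongrightarrow> S x * exp (- c * (y - x))"
    by (intro tendsto_mult tendsto_const tendsto_exp_limit_sequentially)
  obtain M :: nat where M: "c * (y - x) \<le> real M" using real_arch_simple by blast
  show ?thesis
  proof (rule LIMSEQ_le_const2[OF lim], rule exI[of _ "M + 1"], intro allI impI)
    fix n assume "M + 1 \<le> n"
    then show "S x * (1 + - c * (y - x) / real n) ^ n \<le> S y" using key[of n] M by auto
  qed
qed

lemma four_point:
  fixes \<phi> :: "real \<Rightarrow> real"
  assumes three: "\<And>u z w. u < z \<Longrightarrow> z < w \<Longrightarrow> (w - z) * \<phi> u + (z - u) * \<phi> w \<le> (w - u) * \<phi> z"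
    and mono: "\<And>s t. s \<le> t \<Longrightarrow> \<phi> t \<le> \<phi> s"
    and AB: "A \<le> B" and d: "0 \<le> d" "d \<le> e"
  shows "\<phi> A + \<phi> (B + e) \<le> \<phi> (A + d) + \<phi> B"
proof -
  have 1: "\<phi> (B + e) \<le> \<phi> (B + d)" using mono d by simp
  have 2: "\<phi> A + \<phi> (B + d) \<le> \<phi> (A + d) + \<phi> B"
  proof (cases "d = 0 \<or> A = B")
    case True then show ?thesis by auto
  next
    case False
    then have d0: "d > 0" and AB': "A < B" using d AB by auto
    define L where "L = B - A + d"
    have L: "L > 0" using d0 AB' by (simp add: L_def)
    have t1: "(B - A) * \<phi> A + d * \<phi> (B + d) \<le> L * \<phi> (A + d)"
      using three[of A "A + d" "B + d"] d0 AB' by (simp add: L_def algebra_simps)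
    have t2: "d * \<phi> A + (B - A) * \<phi> (B + d) \<le> L * \<phi> B"
      using three[of A B "B + d"] d0 AB' by (simp add: L_def algebra_simps)
    have "L * (\<phi> A + \<phi> (B + d)) \<le> L * (\<phi> (A + d) + \<phi> B)"
      using t1 t2 by (simp add: L_def algebra_simps)
    then show ?thesis using L by simp
  qed
  show ?thesis using 1 2 by linarith
qed

lemma three_point:
  fixes \<phi> g :: "real \<Rightarrow> real"
  assumes sg: "\<And>y z. \<phi> z \<le> \<phi> y + g y * (z - y)" and "u < z" "z < w"
  shows "(w - z) * \<phi> u + (z - u) * \<phi> w \<le> (w - u) * \<phi> z"
proof -
  have a: "(w - z) * \<phi> u \<le> (w - z) * (\<phi> z + g z * (u - z))"
    using sg[of z u] assms by (intro mult_left_mono) auto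
  have b: "(z - u) * \<phi> w \<le> (z - u) * (\<phi> z + g z * (w - z))"
    using sg[of z w] assms by (intro mult_left_mono) auto
  have "(w - z) * (\<phi> z + g z * (u - z)) + (z - u) * (\<phi> z + g z * (w - z)) = (w - u) * \<phi> z"
    by (simp add: algebra_simps)
  then show ?thesis using a b by linarith
qed

lemma max_facts:
  fixes \<sigma>1 \<sigma>2 l1 l2 x y :: real
  assumes "l1 \<ge> l2" "l2 > 0" "\<sigma>1 \<ge> \<sigma>2" "x \<le> y"
  shows "max ((x - \<sigma>1) / l1) 0 \<le> max ((x - \<sigma>2) / l2) 0"
    and "max ((x - \<sigma>1) / l1) 0 \<le> max ((y - \<sigma>1) / l1) 0"
    and "max ((y - \<sigma>1) / l1) 0 - max ((x - \<sigma>1) / l1) 0 \<le> max ((y - \<sigma>2) / l2) 0 - max ((x - \<sigma>2) / l2) 0"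
proof -
  have l1: "l1 > 0" using assms by linarith
  have q1: "(t - \<sigma>1) / l1 \<le> (t - \<sigma>2) / l2" if "t \<ge> \<sigma>1" for t
  proof -
    have "(t - \<sigma>1) / l1 \<le> (t - \<sigma>1) / l2" using that assms by (intro divide_left_mono) auto
    also have "\<dots> \<le> (t - \<sigma>2) / l2" using assms by (intro divide_right_mono) auto
    finally show ?thesis .
  qed
  show "max ((x - \<sigma>1) / l1) 0 \<le> max ((x - \<sigma>2) / l2) 0"
  proof (cases "x \<ge> \<sigma>1")
    case True then show ?thesis using q1[of x] by auto
  next
    case False then have "(x - \<sigma>1) / l1 \<le> 0" using l1 by (simp add: divide_nonpos_pos)
    then show ?thesis by auto
  qed
  show "max ((x - \<sigma>1) / l1) 0 \<le> max ((y - \<sigma>1) / l1) 0"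
  proof -
    have "(x - \<sigma>1) / l1 \<le> (y - \<sigma>1) / l1" using assms l1 by (intro divide_right_mono) auto
    then show ?thesis by auto
  qed
  have dd: "(y - x) / l1 \<le> (y - x) / l2" using assms by (intro divide_left_mono) auto
  show "max ((y - \<sigma>1) / l1) 0 - max ((x - \<sigma>1) / l1) 0 \<le> max ((y - \<sigma>2) / l2) 0 - max ((x - \<sigma>2) / l2) 0"
  proof (cases "x \<ge> \<sigma>1")
    case True
    have p1: "(x - \<sigma>1) / l1 \<ge> 0" "(y - \<sigma>1) / l1 \<ge> 0" using True assms l1 by auto
    have p2: "(x - \<sigma>2) / l2 \<ge> 0" "(y - \<sigma>2) / l2 \<ge> 0" using True assms by auto
    have "max ((y - \<sigma>1) / l1) 0 - max ((x - \<sigma>1) / l1) 0 = (y - x) / l1"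
      using p1 by (simp add: max_def diff_divide_distrib)
    moreover have "max ((y - \<sigma>2) / l2) 0 - max ((x - \<sigma>2) / l2) 0 = (y - x) / l2"
      using p2 by (simp add: max_def diff_divide_distrib)
    ultimately show ?thesis using dd by simp
  next
    case False
    then have x0: "max ((x - \<sigma>1) / l1) 0 = 0" using l1 by (simp add: max_def divide_nonpos_pos)
    show ?thesis
    proof (cases "x \<ge> \<sigma>2")
      case True
      have p2: "(x - \<sigma>2) / l2 \<ge> 0" "(y - \<sigma>2) / l2 \<ge> 0" using True assms by auto
      have "max ((y - \<sigma>2) / l2) 0 - max ((x - \<sigma>2) / l2) 0 = (y - x) / l2"
        using p2 by (simp add: max_def diff_divide_distrib)
      moreover have "max ((y - \<sigma>1) / l1) 0 \<le> (y - x) / l1"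
      proof -
        have "(y - \<sigma>1) / l1 \<le> (y - x) / l1" using False l1 by (intro divide_right_mono) auto
        moreover have "0 \<le> (y - x) / l1" using assms l1 by simp
        ultimately show ?thesis by simp
      qed
      ultimately show ?thesis using dd x0 by simp
    next
      case False2: False
      then have x2: "max ((x - \<sigma>2) / l2) 0 = 0" using assms by (simp add: max_def divide_nonpos_pos)
      have "max ((y - \<sigma>1) / l1) 0 \<le> max ((y - \<sigma>2) / l2) 0"
      proof (cases "y \<ge> \<sigma>1")
        case True then show ?thesis using q1[of y] by auto
      next
        case False then have "(y - \<sigma>1) / l1 \<le> 0" using l1 by (simp add: divide_nonpos_pos)
        then show ?thesis by auto
      qed
      then show ?thesis using x0 x2 by simp
    qed
  qed
qed

theorem theorem4p3:
  fixes F f :: "real \<Rightarrow> real"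
    and \<sigma>1 \<sigma>2 l1 l2 r1 r2 :: real
    and n1 n2 n1s n2s :: nat
  assumes dens_nonneg: "\<And>x. f x \<ge> 0"
    and dens: "\<And>x. x \<ge> 0 \<Longrightarrow> (f has_integral F x) {0..x}"
    and F_neg: "\<And>x. x \<le> 0 \<Longrightarrow> F x = 0"
    and F_lim: "(F \<longlongrightarrow> 1) at_top"
    and supp_lt1: "\<And>x. F x < 1"
    and supp_strict: "strict_mono_on {0..} F"
    and \<sigma>_nn: "\<sigma>1 \<ge> 0" "\<sigma>2 \<ge> 0"
    and l_pos: "l1 > 0" "l2 > 0"
    and r_nn: "r1 \<ge> 0" "r2 \<ge> 0"
    and n_pos: "n1 > 0" "n2 > 0" "n1s > 0" "n2s > 0"
    and sum1: "real n1 * r1 + real n2 * r2 = 1"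
    and sum1s: "real n1s * r1 + real n2s * r2 = 1"
    and cases: "(IFR F f \<and> l1 \<ge> l2 \<and> l2 > 0 \<and> \<sigma>1 \<ge> \<sigma>2 \<and> \<sigma>2 > 0)
              \<or> (DPFR F f \<and> 0 < l1 \<and> l1 \<le> l2 \<and> 0 < \<sigma>1 \<and> \<sigma>1 \<le> \<sigma>2)"
    and ineq: "n1 * n2s \<ge> n1s * n2"
  shows "hr_ge (U_cdf F \<sigma>1 \<sigma>2 l1 l2 r1 r2 n1 n2) (U_cdf F \<sigma>1 \<sigma>2 l1 l2 r1 r2 n1s n2s)"
proof -
  define S where "S t = 1 - F t" for t
  define h where "h = hazard F f"
  have F_nn: "F x \<ge> 0" for x
  proof (cases "x \<ge> 0")
    case True then show ?thesis using has_integral_nonneg[OF dens[OF True]] dens_nonneg by auto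
  next
    case False then show ?thesis using F_neg by auto
  qed
  have F_mono: "F x \<le> F y" if "x \<le> y" for x y
  proof (cases "x \<ge> 0")
    case True then show ?thesis using that supp_strict
      by (cases "x = y") (auto simp: strict_mono_on_def intro: less_imp_le)
  next
    case False then show ?thesis using F_neg[of x] F_nn[of y] by auto
  qed
  have S_pos: "S t > 0" for t using supp_lt1[of t] by (simp add: S_def)
  have S_le1: "S t \<le> 1" for t using F_nn[of t] by (simp add: S_def)
  have S_neg: "S t = 1" if "t \<le> 0" for t using F_neg[OF that] by (simp add: S_def)
  have S_anti: "S y \<le> S x" if "x \<le> y" for x y using F_mono[OF that] by (simp add: S_def)
  have piece: "(f has_integral (S p - S q)) {p..q}" if "0 \<le> p" "p \<le> q" for p q
    using piece_integral[of f F p q, OF dens that] by (simp add: S_def)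
  have fh: "f s = h s * S s" for s
    using S_pos[of s] by (simp add: h_def hazard_def S_def)
  have h_nn: "h s \<ge> 0" for s
    using S_pos[of s] dens_nonneg[of s] by (simp add: h_def hazard_def S_def)
  show ?thesis
  proof (cases "IFR F f \<and> l1 \<ge> l2 \<and> l2 > 0 \<and> \<sigma>1 \<ge> \<sigma>2 \<and> \<sigma>2 > 0")
    case False
    then have dp: "DPFR F f" using cases by blast
    have False
    proof -
      obtain x0 where x0: "x0 > 0" "f x0 > 0"
      proof (rule ccontr)
        assume "\<not> thesis"
        with that have z: "f x = 0" if "x > 0" for x using dens_nonneg[of x] that by force
        have z0: "((\<lambda>_. 0::real) has_integral 0) {0..1::real}" by (rule has_integral_0)
        have zz: "f x = 0" if "x \<in> {0..1} - {0}" for x using that z by auto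
        have "(f has_integral 0) {0..1}"
          by (rule has_integral_spike_finite[of "{0}", OF _ zz z0]) simp
        moreover have "(f has_integral F 1) {0..1}" using dens[of 1] by simp
        ultimately have "F 1 = 0" by (rule has_integral_unique[symmetric])
        moreover have "F 0 < F 1" using supp_strict by (auto simp: strict_mono_on_def)
        ultimately show False using F_neg[of 0] by simp
      qed
      define c where "c = x0 * h x0"
      have c: "c > 0" using x0 S_pos[of x0] fh[of x0] by (auto simp: c_def zero_less_mult_iff)
      define K where "K = c * S x0"
      have K: "K > 0" using c S_pos[of x0] by (simp add: K_def)
      have fK: "K / s \<le> f s" if "0 < s" "s \<le> x0" for s
      proof -
        have "c \<le> s * h s" using dp that by (simp add: DPFR_def c_def h_def)
        then have hs: "c / s \<le> h s" using that by (simp add: divide_simps mult.commute)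
        have "K / s = (c / s) * S x0" by (simp add: K_def)
        also have "\<dots> \<le> h s * S s"
          using hs S_anti[OF that(2)] c that S_pos[of x0] h_nn[of s] by (intro mult_mono) auto
        finally show ?thesis using fh by simp
      qed
      have bound: "K * (ln x0 - ln e) \<le> 1" if e: "0 < e" "e \<le> x0" for e
      proof -
        have der: "((\<lambda>s. K * ln s) has_vector_derivative K / s) (at s within {e..x0})"
          if "s \<in> {e..x0}" for s
          unfolding has_real_derivative_iff_has_vector_derivative[symmetric]
          using that e by (auto intro!: derivative_eq_intros simp: field_simps)
        have i1: "((\<lambda>s. K / s) has_integral (K * ln x0 - K * ln e)) {e..x0}"
          using fundamental_theorem_of_calculus[OF e(2) der] by simp
        have "K * ln x0 - K * ln e \<le> S e - S x0"
          by (rule has_integral_le[OF i1 piece]) (use e fK in auto)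
        then show ?thesis using S_le1[of e] S_pos[of x0] by (simp add: algebra_simps)
      qed
      define e where "e = x0 * exp (- 2 / K)"
      have e0: "0 < e" using x0 by (simp add: e_def)
      have ex: "e \<le> x0" using x0 K by (simp add: e_def mult_le_cancel_left1)
      have "ln e = ln x0 - 2 / K" using x0 by (simp add: e_def ln_mult)
      then have "K * (ln x0 - ln e) = 2" using K by simp
      then show False using bound[OF e0 ex] by simp
    qed
    then show ?thesis ..
  next
    case True
    then have ifr: "IFR F f" and l12: "l1 \<ge> l2" and s12: "\<sigma>1 \<ge> \<sigma>2" by auto
    have hmono: "h s \<le> h t" if "0 < s" "s \<le> t" for s t
      using ifr that by (simp add: IFR_def h_def)
    have up: "S t * exp (h y * (t - y)) \<le> S y" if "0 < y" "y \<le> t" for y t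
    proof (rule gron_up[OF _ h_nn S_pos that(2)])
      fix p q assume pq: "y \<le> p" "p \<le> q"
      have "h y * S q * (q - p) \<le> S p - S q"
      proof (rule int_lower[OF piece[OF _ pq(2)] pq(2)])
        show "0 \<le> p" using pq that by auto
        fix s assume s: "s \<in> {p..q}"
        have "h y * S q \<le> h s * S s"
          using s pq that hmono[of y s] S_anti[of s q] S_pos[of q] h_nn[of y]
          by (intro mult_mono) auto
        then show "h y * S q \<le> f s" using fh by simp
      qed
      then show "S q * (1 + h y * (q - p)) \<le> S p" by (simp add: algebra_simps)
    qed
    have low: "S x * exp (- h y * (y - x)) \<le> S y" if "0 < y" "0 \<le> x" "x \<le> y" for x y
    proof (rule gron_low[OF _ h_nn S_pos that(3)])
      fix p q assume pq: "x \<le> p" "p \<le> q" "q \<le> y"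
      have "S p - S q \<le> h y * S p * (q - p)"
      proof (rule int_upper[OF piece[OF _ pq(2)] pq(2)])
        show "0 \<le> p" using pq that by auto
        fix s assume s: "s \<in> {p<..q}"
        have "h s * S s \<le> h y * S p"
          using s pq that hmono[of s y] S_anti[of p s] S_pos[of s] h_nn[of s]
          by (intro mult_mono) auto
        then show "f s \<le> h y * S p" using fh by simp
      qed
      then show "S p * (1 - h y * (q - p)) \<le> S q" by (simp add: algebra_simps)
    qed
    define \<phi> where "\<phi> t = ln (S t)" for t
    define g where "g y = (if y \<le> 0 then 0 else - h y)" for y
    have sg: "\<phi> z \<le> \<phi> y + g y * (z - y)" for y z
    proof (cases "y \<le> 0")
      case True
      then show ?thesis using S_le1[of z] S_pos[of z] S_neg[OF True] by (simp add: \<phi>_def g_def)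
    next
      case False
      then have y0: "y > 0" by simp
      show ?thesis
      proof (cases "z \<ge> y")
        case True
        have "ln (S z * exp (h y * (z - y))) \<le> ln (S y)"
          using up[OF y0 True] S_pos by simp
        then show ?thesis using S_pos[of z] y0 by (simp add: \<phi>_def g_def ln_mult algebra_simps)
      next
        case zy: False
        show ?thesis
        proof (cases "z \<ge> 0")
          case True
          have "ln (S z * exp (- h y * (y - z))) \<le> ln (S y)"
            using low[OF y0 True] zy S_pos by simp
          then show ?thesis using S_pos[of z] y0 by (simp add: \<phi>_def g_def ln_mult algebra_simps)
        next
          case False
          have "ln (S 0 * exp (- h y * (y - 0))) \<le> ln (S y)"
            using low[OF y0, of 0] y0 S_pos by simp
          then have "- h y * y \<le> \<phi> y" using S_neg[of 0] by (simp add: \<phi>_def)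
          moreover have "\<phi> z = 0" using False S_neg[of z] by (simp add: \<phi>_def)
          moreover have "h y * z \<le> 0" using False h_nn[of y] by (simp add: mult_nonneg_nonpos)
          ultimately show ?thesis using y0 by (simp add: g_def algebra_simps)
        qed
      qed
    qed
    have \<phi>mono: "\<phi> t \<le> \<phi> s" if "s \<le> t" for s t
      using S_anti[OF that] S_pos by (simp add: \<phi>_def)
    have fp: "\<phi> A + \<phi> (B + e) \<le> \<phi> (A + d) + \<phi> B" if "A \<le> B" "0 \<le> d" "d \<le> e" for A B d e
      by (rule four_point[OF three_point[OF sg] \<phi>mono that])
    define a where "a t = max ((t - \<sigma>1) / l1) 0" for t
    define b where "b t = max ((t - \<sigma>2) / l2) 0" for t
    define G1 where "G1 t = S ((t - \<sigma>1) / l1)" for t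
    define G2 where "G2 t = S ((t - \<sigma>2) / l2)" for t
    have G1a: "G1 t = S (a t)" for t
      by (cases "(t - \<sigma>1) / l1 \<le> 0") (auto simp: G1_def a_def max_def S_neg)
    have G2b: "G2 t = S (b t)" for t
      by (cases "(t - \<sigma>2) / l2 \<le> 0") (auto simp: G2_def b_def max_def S_neg)
    have G_key: "G1 x * G2 y \<le> G1 y * G2 x" if "x \<le> y" for x y
    proof -
      note mf = max_facts[OF l12 l_pos(2) s12 that]
      have "\<phi> (a x) + \<phi> (b x + (b y - b x)) \<le> \<phi> (a x + (a y - a x)) + \<phi> (b x)"
        by (rule fp) (use mf in \<open>auto simp: a_def b_def\<close>)
      then have "\<phi> (a x) + \<phi> (b y) \<le> \<phi> (a y) + \<phi> (b x)" by simp
      then have "ln (S (a x) * S (b y)) \<le> ln (S (a y) * S (b x))"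
        using S_pos[of "a x"] S_pos[of "b y"] S_pos[of "a y"] S_pos[of "b x"] by (simp add: \<phi>_def ln_mult)
      then have "S (a x) * S (b y) \<le> S (a y) * S (b x)"
        using S_pos[of "a x"] S_pos[of "b y"] S_pos[of "a y"] S_pos[of "b x"] by (simp add: mult_pos_pos)
      then show ?thesis by (simp add: G1a G2b)
    qed
    have G_pos: "G1 t > 0" "G2 t > 0" for t by (auto simp: G1_def G2_def S_pos)
    have Ucdf: "1 - U_cdf F \<sigma>1 \<sigma>2 l1 l2 r1 r2 m1 m2 t = real m1 * r1 * G1 t + real m2 * r2 * G2 t"
      if "real m1 * r1 + real m2 * r2 = 1" for m1 m2 t
    proof -
      have i1: "F ((t - \<sigma>1) / l1) * Ind_gt t \<sigma>1 = F ((t - \<sigma>1) / l1)"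
        using l_pos F_neg[of "(t - \<sigma>1) / l1"] by (auto simp: Ind_gt_def divide_nonpos_pos)
      have i2: "F ((t - \<sigma>2) / l2) * Ind_gt t \<sigma>2 = F ((t - \<sigma>2) / l2)"
        using l_pos F_neg[of "(t - \<sigma>2) / l2"] by (auto simp: Ind_gt_def divide_nonpos_pos)
      have "U_cdf F \<sigma>1 \<sigma>2 l1 l2 r1 r2 m1 m2 t
          = real m1 * r1 * F ((t - \<sigma>1) / l1) + real m2 * r2 * F ((t - \<sigma>2) / l2)"
      proof -
        have j1: "real m1 * r1 * F ((t - \<sigma>1) / l1) * Ind_gt t \<sigma>1 = real m1 * r1 * F ((t - \<sigma>1) / l1)"
          using i1 by (metis mult.assoc)
        have j2: "real m2 * r2 * F ((t - \<sigma>2) / l2) * Ind_gt t \<sigma>2 = real m2 * r2 * F ((t - \<sigma>2) / l2)"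
          using i2 by (metis mult.assoc)
        show ?thesis unfolding U_cdf_def j1 j2 ..
      qed
      then show ?thesis using that by (simp add: G1_def G2_def S_def algebra_simps)
    qed
    define \<alpha> where "\<alpha> = real n1 * r1"
    define \<beta> where "\<beta> = real n2 * r2"
    define \<alpha>' where "\<alpha>' = real n1s * r1"
    define \<beta>' where "\<beta>' = real n2s * r2"
    have coef: "\<alpha> * \<beta>' - \<beta> * \<alpha>' \<ge> 0"
    proof -
      have "real n1s * real n2 \<le> real n1 * real n2s" using ineq
        by (metis of_nat_mono of_nat_mult)
      then have "0 \<le> r1 * r2 * (real n1 * real n2s - real n2 * real n1s)"
        using r_nn by (intro mult_nonneg_nonneg) (auto simp: mult.commute)
      then show ?thesis by (simp add: \<alpha>_def \<beta>_def \<alpha>'_def \<beta>'_def algebra_simps)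
    qed
    have ab_nn: "\<alpha> \<ge> 0" "\<beta> \<ge> 0" "\<alpha>' \<ge> 0" "\<beta>' \<ge> 0"
      using r_nn by (auto simp: \<alpha>_def \<beta>_def \<alpha>'_def \<beta>'_def)
    have Dpos: "\<alpha>' * G1 t + \<beta>' * G2 t > 0" for t
    proof -
      have "\<alpha>' + \<beta>' = 1" using sum1s by (simp add: \<alpha>'_def \<beta>'_def)
      then have "\<alpha>' > 0 \<or> \<beta>' > 0" using ab_nn by linarith
      then show ?thesis using ab_nn G_pos[of t]
        by (auto intro: add_pos_nonneg add_nonneg_pos mult_nonneg_nonneg)
    qed
    show ?thesis
      unfolding hr_ge_def
    proof (intro allI impI)
      fix x y :: real assume x0: "0 \<le> x" and xy: "x \<le> y"
      have eqs: "1 - U_cdf F \<sigma>1 \<sigma>2 l1 l2 r1 r2 n1 n2 t = \<alpha> * G1 t + \<beta> * G2 t"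
        "1 - U_cdf F \<sigma>1 \<sigma>2 l1 l2 r1 r2 n1s n2s t = \<alpha>' * G1 t + \<beta>' * G2 t" for t
        using Ucdf[OF sum1] Ucdf[OF sum1s] by (auto simp: \<alpha>_def \<beta>_def \<alpha>'_def \<beta>'_def)
      have id: "(\<alpha> * G1 y + \<beta> * G2 y) * (\<alpha>' * G1 x + \<beta>' * G2 x)
              - (\<alpha> * G1 x + \<beta> * G2 x) * (\<alpha>' * G1 y + \<beta>' * G2 y)
              = (\<alpha> * \<beta>' - \<beta> * \<alpha>') * (G1 y * G2 x - G1 x * G2 y)"
        by (simp add: algebra_simps)
      have "0 \<le> (\<alpha> * \<beta>' - \<beta> * \<alpha>') * (G1 y * G2 x - G1 x * G2 y)"
        using coef G_key[of x y] xy by (intro mult_nonneg_nonneg) auto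
      then have cross: "(\<alpha> * G1 x + \<beta> * G2 x) * (\<alpha>' * G1 y + \<beta>' * G2 y)
          \<le> (\<alpha> * G1 y + \<beta> * G2 y) * (\<alpha>' * G1 x + \<beta>' * G2 x)"
        using id by linarith
      show "(1 - U_cdf F \<sigma>1 \<sigma>2 l1 l2 r1 r2 n1 n2 x) / (1 - U_cdf F \<sigma>1 \<sigma>2 l1 l2 r1 r2 n1s n2s x)
          \<le> (1 - U_cdf F \<sigma>1 \<sigma>2 l1 l2 r1 r2 n1 n2 y) / (1 - U_cdf F \<sigma>1 \<sigma>2 l1 l2 r1 r2 n1s n2s y)"
        unfolding eqs using Dpos[of x] Dpos[of y] cross
        by (simp add: divide_le_eq le_divide_eq mult.commute mult.left_commute)
    qed
  qed
qed

end
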